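(* Let $k\in\mathbb{N}$ and let $M_\psi$ be a bounded multiplication operator on $\mathcal{L}^{(k)}$ or on $\mathcal{L}^{(k)}_0$. Then (a) $\sigma_p(M_\psi)=\psi(T)$; (b) $\sigma(M_\psi)=\overline{\psi(T)}$; (c) $\sigma_{ap}(M_\psi)=\overline{\psi(T)}$.
   Context: $T$ is a tree (locally finite, connected, simply connected graph, identified with its vertex set) without terminal vertices, rooted at $o$. $|v|$ is the distance (number of edges) from $o$ to $v$; for $v\ne o$, $v^-$ is the parent of $v$ (its neighbor on the path to $o$). $T^*=T\setminus\{o\}$, $Df(v)=|f(v)-f(v^-)|$ for $v\in T^*$. For $x\ge1$: $\ell_0(x)=1$, $\ell_1(x)=1+\ln x$, $\ell_j(x)=1+\ln\ell_{j-1}(x)$ for $j\ge2$. $\mathcal{L}^{(k)}$ is the space of $f:T\to\mathbb{C}$ with $\sup_{v\in T^*}|v|\prod_{j=0}^{k-1}\ell_j(|v|)Df(v)<\infty$, normed by $\|f\|_k=|f(o)|+\sup_{v\in T^*}|v|\prod_{j=0}^{k-1}\ell_j(|v|)Df(v)$; $\mathcal{L}^{(k)}_0$ is its subspace of $f$ with $|v|\prod_{j=0}^{k-1}\ell_j(|v|)Df(v)\to0$ as $|v|\to\infty$. $M_\psi f=\psi f$. $\sigma$, $\sigma_p$, $\sigma_{ap}$ denote the spectrum, point spectrum and approximate point spectrum of the operator on the space where it acts. *)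

theory Defs
  imports "HOL-Analysis.Analysis"
begin

text \<open>A graph is given by an adjacency relation E on the vertex type 'v;
  the tree is identified with its vertex set, i.e. all of UNIV.\<close>

definition walk :: "('v \<Rightarrow> 'v \<Rightarrow> bool) \<Rightarrow> 'v \<Rightarrow> 'v \<Rightarrow> nat \<Rightarrow> bool" where
  "walk E u v n \<longleftrightarrow> (\<exists>p. length p = Suc n \<and> hd p = u \<and> last p = v \<and>
      (\<forall>i<n. E (p ! i) (p ! Suc i)))"

definition is_cycle :: "('v \<Rightarrow> 'v \<Rightarrow> bool) \<Rightarrow> 'v list \<Rightarrow> bool" where
  "is_cycle E p \<longleftrightarrow> length p \<ge> 3 \<and> distinct p \<and>
      (\<forall>i. Suc i < length p \<longrightarrow> E (p ! i) (p ! Suc i)) \<and> E (last p) (hd p)"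

definition rooted_tree_no_terminal :: "('v \<Rightarrow> 'v \<Rightarrow> bool) \<Rightarrow> 'v \<Rightarrow> bool" where
  "rooted_tree_no_terminal E r \<longleftrightarrow>
     (\<forall>u v. E u v \<longrightarrow> E v u) \<and> (\<forall>v. \<not> E v v) \<and>
     (\<forall>v. finite {u. E v u}) \<and>
     (\<forall>u v. \<exists>n. walk E u v n) \<and>
     (\<forall>p. \<not> is_cycle E p) \<and>
     (\<forall>v. card {u. E v u} \<noteq> 1)"

definition tdist :: "('v \<Rightarrow> 'v \<Rightarrow> bool) \<Rightarrow> 'v \<Rightarrow> 'v \<Rightarrow> nat" where
  "tdist E r v = (LEAST n. walk E r v n)"

definition parent :: "('v \<Rightarrow> 'v \<Rightarrow> bool) \<Rightarrow> 'v \<Rightarrow> 'v \<Rightarrow> 'v" where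
  "parent E r v = (THE u. E v u \<and> Suc (tdist E r u) = tdist E r v)"

definition Df :: "('v \<Rightarrow> 'v \<Rightarrow> bool) \<Rightarrow> 'v \<Rightarrow> ('v \<Rightarrow> complex) \<Rightarrow> 'v \<Rightarrow> real" where
  "Df E r f v = cmod (f v - f (parent E r v))"

fun ell :: "nat \<Rightarrow> real \<Rightarrow> real" where
  "ell 0 x = 1"
| "ell (Suc 0) x = 1 + ln x"
| "ell (Suc (Suc j)) x = 1 + ln (ell (Suc j) x)"

definition wt :: "nat \<Rightarrow> nat \<Rightarrow> real" where
  "wt k n = real n * (\<Prod>j<k. ell j (real n))"

definition Lk :: "('v \<Rightarrow> 'v \<Rightarrow> bool) \<Rightarrow> 'v \<Rightarrow> nat \<Rightarrow> ('v \<Rightarrow> complex) set" where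
  "Lk E r k = {f. bdd_above ((\<lambda>v. wt k (tdist E r v) * Df E r f v) ` {v. v \<noteq> r})}"

definition Lk0 :: "('v \<Rightarrow> 'v \<Rightarrow> bool) \<Rightarrow> 'v \<Rightarrow> nat \<Rightarrow> ('v \<Rightarrow> complex) set" where
  "Lk0 E r k = {f \<in> Lk E r k. \<forall>\<epsilon>>0. \<exists>N. \<forall>v. v \<noteq> r \<longrightarrow> tdist E r v \<ge> N \<longrightarrow>
                   wt k (tdist E r v) * Df E r f v < \<epsilon>}"

text \<open>The supremum is taken over the nonnegative quantities together with 0,
  which agrees with the supremum over T* whenever T* is nonempty.\<close>
definition normk :: "('v \<Rightarrow> 'v \<Rightarrow> bool) \<Rightarrow> 'v \<Rightarrow> nat \<Rightarrow> ('v \<Rightarrow> complex) \<Rightarrow> real" where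
  "normk E r k f = cmod (f r) +
     Sup (insert 0 ((\<lambda>v. wt k (tdist E r v) * Df E r f v) ` {v. v \<noteq> r}))"

definition mult_op :: "('v \<Rightarrow> complex) \<Rightarrow> ('v \<Rightarrow> complex) \<Rightarrow> ('v \<Rightarrow> complex)" where
  "mult_op \<psi> f = (\<lambda>v. \<psi> v * f v)"

definition bounded_op :: "('v \<Rightarrow> complex) set \<Rightarrow> (('v \<Rightarrow> complex) \<Rightarrow> real)
     \<Rightarrow> (('v \<Rightarrow> complex) \<Rightarrow> ('v \<Rightarrow> complex)) \<Rightarrow> bool" where
  "bounded_op X N A \<longleftrightarrow> (\<forall>f\<in>X. A f \<in> X) \<and>
     (\<forall>f\<in>X. \<forall>g\<in>X. \<forall>a b. A (\<lambda>v. a * f v + b * g v) = (\<lambda>v. a * A f v + b * A g v)) \<and>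
     (\<exists>C. \<forall>f\<in>X. N (A f) \<le> C * N f)"

definition invertible_op :: "('v \<Rightarrow> complex) set \<Rightarrow> (('v \<Rightarrow> complex) \<Rightarrow> real)
     \<Rightarrow> (('v \<Rightarrow> complex) \<Rightarrow> ('v \<Rightarrow> complex)) \<Rightarrow> bool" where
  "invertible_op X N A \<longleftrightarrow> (\<exists>S. bounded_op X N S \<and> (\<forall>f\<in>X. S (A f) = f \<and> A (S f) = f))"

definition shift_op :: "(('v \<Rightarrow> complex) \<Rightarrow> ('v \<Rightarrow> complex)) \<Rightarrow> complex
     \<Rightarrow> ('v \<Rightarrow> complex) \<Rightarrow> ('v \<Rightarrow> complex)" where
  "shift_op A c f = (\<lambda>v. A f v - c * f v)"

definition op_spectrum where
  "op_spectrum X N A = {c. \<not> invertible_op X N (shift_op A c)}"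

definition point_spectrum where
  "point_spectrum X N A = {c. \<exists>f\<in>X. f \<noteq> (\<lambda>_. 0) \<and> A f = (\<lambda>v. c * f v)}"

definition approx_point_spectrum where
  "approx_point_spectrum X N A = {c. \<exists>fs. (\<forall>n. fs n \<in> X \<and> N (fs n) = 1) \<and>
       (\<lambda>n. N (shift_op A c (fs n))) \<longlonglongrightarrow> 0}"

end

theory Submission
  imports Defs
begin


lemma walk_fun: "walk E u v n \<longleftrightarrow> (\<exists>q. q 0 = u \<and> q n = v \<and> (\<forall>i<n. E (q i) (q (Suc i))))"
proof
  assume "walk E u v n"
  then obtain p where p: "length p = Suc n" "hd p = u" "last p = v" "\<forall>i<n. E (p ! i) (p ! Suc i)"
    unfolding walk_def by blast
  have "p ! 0 = u" using p by (metis hd_conv_nth list.size(3) nat.distinct(1))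
  moreover have "p ! n = v" using p by (metis last_conv_nth list.size(3) nat.distinct(1) diff_Suc_1)
  ultimately show "\<exists>q. q 0 = u \<and> q n = v \<and> (\<forall>i<n. E (q i) (q (Suc i)))"
    using p(4) by (intro exI[of _ "nth p"]) auto
next
  assume "\<exists>q. q 0 = u \<and> q n = v \<and> (\<forall>i<n. E (q i) (q (Suc i)))"
  then obtain q where q: "q 0 = u" "q n = v" "\<forall>i<n. E (q i) (q (Suc i))" by blast
  show "walk E u v n" unfolding walk_def
  proof (rule exI[of _ "map q [0..<Suc n]"], intro conjI)
    show "hd (map q [0..<Suc n]) = u" using q by (simp del: upt_Suc add: hd_map)
    show "last (map q [0..<Suc n]) = v" using q by (simp add: last_map)
    show "\<forall>i<n. E (map q [0..<Suc n] ! i) (map q [0..<Suc n] ! Suc i)"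
      using q(3) by (simp del: upt_Suc add: nth_map_upt)
  qed simp
qed

lemma walk_append:
  assumes "walk E a b m" "walk E b c n" shows "walk E a c (m+n)"
proof -
  obtain q1 where q1: "q1 0 = a" "q1 m = b" "\<forall>i<m. E (q1 i) (q1 (Suc i))"
    using assms(1) unfolding walk_fun by blast
  obtain q2 where q2: "q2 0 = b" "q2 n = c" "\<forall>i<n. E (q2 i) (q2 (Suc i))"
    using assms(2) unfolding walk_fun by blast
  define q where "q i = (if i \<le> m then q1 i else q2 (i - m))" for i
  have "\<forall>i<m+n. E (q i) (q (Suc i))"
  proof (intro allI impI)
    fix i assume i: "i < m+n"
    show "E (q i) (q (Suc i))"
    proof (cases "i < m")
      case True then show ?thesis using q1 by (simp add: q_def)
    next
      case False
      then have "q i = q2 (i - m)" using q1 q2 by (auto simp: q_def)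
      moreover have "q (Suc i) = q2 (Suc (i - m))" using False by (simp add: q_def Suc_diff_le)
      ultimately show ?thesis using q2 i False by simp
    qed
  qed
  moreover have "q 0 = a" "q (m+n) = c" using q1 q2 by (auto simp: q_def)
  ultimately show ?thesis unfolding walk_fun by blast
qed

lemma walk_suffix:
  assumes "\<forall>i<n. E (q i) (q (Suc i))" "j \<le> n"
  shows "walk E (q j) (q n) (n - j)"
  unfolding walk_fun
  by (rule exI[of _ "\<lambda>i. q (j + i)"]) (use assms in auto)

locale T =
  fixes E :: "'v \<Rightarrow> 'v \<Rightarrow> bool" and r :: 'v
  assumes tree: "rooted_tree_no_terminal E r"
begin

lemma symm: "E u v \<Longrightarrow> E v u" using tree unfolding rooted_tree_no_terminal_def by blast
lemma conn: "\<exists>n. walk E u v n" using tree unfolding rooted_tree_no_terminal_def by blast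
lemma acyc: "\<not> is_cycle E p" using tree unfolding rooted_tree_no_terminal_def by blast

abbreviation d where "d \<equiv> tdist E r"

lemma walk_d: "walk E r v (d v)"
  unfolding tdist_def by (rule LeastI_ex) (use conn in blast)

lemma d_le: "walk E r v n \<Longrightarrow> d v \<le> n"
  unfolding tdist_def by (rule Least_le)

lemma d0: "d v = 0 \<Longrightarrow> v = r"
  using walk_d[of v] unfolding walk_fun by auto

lemma d_path:
  assumes "q 0 = r" "q n = v" "\<forall>i<n. E (q i) (q (Suc i))" "n = d v" "j \<le> n"
  shows "d (q j) = j"
proof -
  have w1: "walk E r (q j) j" unfolding walk_fun
    by (rule exI[of _ q]) (use assms in auto)
  have le: "d (q j) \<le> j" by (rule d_le[OF w1])
  have w2: "walk E (q j) v (n - j)" using walk_suffix[of n E q j, OF assms(3) assms(5)] assms(2) by simp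
  have "walk E r v (d (q j) + (n - j))" by (rule walk_append[OF walk_d w2])
  then have "d v \<le> d (q j) + (n - j)" by (rule d_le)
  then show ?thesis using le assms(4,5) by linarith
qed


lemma uniq:
  assumes e1: "E v u1" and e2: "E v u2" and s1: "Suc (d u1) = d v" and s2: "Suc (d u2) = d v"
  shows "u1 = u2"
proof (rule ccontr)
  assume ne: "u1 \<noteq> u2"
  define n where "n = d u1"
  have n2: "d u2 = n" using s1 s2 n_def by simp
  obtain q1 where q1: "q1 0 = r" "q1 n = u1" "\<forall>i<n. E (q1 i) (q1 (Suc i))"
    using walk_d[of u1] unfolding walk_fun n_def by blast
  obtain q2 where q2: "q2 0 = r" "q2 n = u2" "\<forall>i<n. E (q2 i) (q2 (Suc i))"
    using walk_d[of u2] unfolding walk_fun n2 by blast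
  have d1: "\<And>j. j \<le> n \<Longrightarrow> d (q1 j) = j" using d_path[OF q1] n_def by simp
  have d2: "\<And>j. j \<le> n \<Longrightarrow> d (q2 j) = j" using d_path[OF q2] n2 by simp
  define m where "m = (GREATEST j. j \<le> n \<and> q1 j = q2 j)"
  have m: "m \<le> n \<and> q1 m = q2 m" unfolding m_def
    by (rule GreatestI_nat[of _ 0 n]) (auto simp: q1 q2)
  have mmax: "\<And>j. j \<le> n \<Longrightarrow> q1 j = q2 j \<Longrightarrow> j \<le> m" unfolding m_def
    by (rule Greatest_le_nat[of _ _ n]) auto
  have mn: "m < n" using m ne q1 q2 le_neq_implies_less by metis
  define K where "K = n - m"
  have K1: "K \<ge> 1" using mn K_def by simp
  have dv: "d v = m + K + 1" using s1 n_def K_def mn by simp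
  define g where "g i = (if i \<le> K then q1 (m+i) else if i = K+1 then v else q2 (m + (2*K+2 - i)))" for i
  define c where "c = map g [0..<2*K+2]"
  have dg: "d (g i) = (if i \<le> K+1 then m+i else m+2*K+2-i)" if "i < 2*K+2" for i
    using that d1 d2 dv K_def mn by (auto simp: g_def)
  have inj: "inj_on g {0..<2*K+2}"
  proof (rule inj_onI)
    fix i j assume i: "i \<in> {0..<2*K+2}" and j: "j \<in> {0..<2*K+2}" and gij: "g i = g j"
    have dij: "d (g i) = d (g j)" using gij by simp
    have nb: False if a: "a \<le> K" "b \<ge> K+2" "b < 2*K+2" "g a = g b" for a b
    proof -
      have "d (g a) = d (g b)" using a(4) by (rule arg_cong)
      moreover have "d (g a) = m + a" using dg[of a] a(1) by simp
      moreover have "d (g b) = m+2*K+2-b" using dg[of b] a(2,3) by simp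
      ultimately have ab: "a = 2*K+2-b" by linarith
      have a1: "a \<ge> 1" using ab a(3) by linarith
      have "g b = q2 (m+a)" using a(2) ab by (simp add: g_def)
      moreover have "g a = q1 (m+a)" using a(1) by (simp add: g_def)
      ultimately have "q1 (m+a) = q2 (m+a)" using a(4) by simp
      moreover have "m + a \<le> n" using a(1) K_def mn by linarith
      ultimately have "m + a \<le> m" using mmax by blast
      then show False using a1 by linarith
    qed
    have nc: False if a: "b \<ge> K+2" "b < 2*K+2" "g (K+1) = g b" for b
    proof -
      have "d (g (K+1)) = d (g b)" using a(3) by (rule arg_cong)
      moreover have "d (g (K+1)) = m + K + 1" using dg[of "K+1"] by simp
      moreover have "d (g b) = m+2*K+2-b" using dg[of b] a(1,2) by simp
      ultimately show False using a by linarith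
    qed
    have i2: "i < 2*K+2" and j2: "j < 2*K+2" using i j by auto
    show "i = j"
    proof (cases "i \<le> K+1 \<longleftrightarrow> j \<le> K+1")
      case True
      then show ?thesis
      proof (cases "i \<le> K+1")
        case True
        have jj: "j \<le> K+1" using True \<open>i \<le> K+1 \<longleftrightarrow> j \<le> K+1\<close> by blast
        have "d (g i) = m + i" using dg[OF i2] True by simp
        moreover have "d (g j) = m + j" using dg[OF j2] jj by simp
        ultimately show ?thesis using dij by linarith
      next
        case False
        have jj: "\<not> j \<le> K+1" using False \<open>i \<le> K+1 \<longleftrightarrow> j \<le> K+1\<close> by blast
        have "d (g i) = m+2*K+2-i" using dg[OF i2] False by simp
        moreover have "d (g j) = m+2*K+2-j" using dg[OF j2] jj by simp
        ultimately show ?thesis using dij i2 j2 by linarith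
      qed
    next
      case False
      then consider "i \<le> K" "j \<ge> K+2" | "i = K+1" "j \<ge> K+2" | "j \<le> K" "i \<ge> K+2" | "j = K+1" "i \<ge> K+2"
        by linarith
      then show ?thesis
      proof cases
        case 1 then show ?thesis using nb[of i j] j2 gij by blast
      next
        case 2 then show ?thesis using nc[of j] j2 gij by blast
      next
        case 3 then show ?thesis using nb[of j i] i2 gij by metis
      next
        case 4 then show ?thesis using nc[of i] i2 gij by metis
      qed
    qed
  qed
  have edges: "E (g i) (g (Suc i))" if "Suc i < 2*K+2" for i
  proof -
    consider "i < K" | "i = K" | "i = K+1" | "i \<ge> K+2" by linarith
    then show ?thesis
    proof cases
      case 1 then show ?thesis using q1(3) K_def mn by (simp add: g_def)
    next
      case 2 then show ?thesis using symm[OF e1] q1(2) K_def mn by (simp add: g_def)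
    next
      case 3
      have "g (Suc i) = q2 (m + (2*K+2 - Suc i))" using 3 by (simp add: g_def)
      moreover have "m + (2*K+2 - Suc i) = n" using 3 K_def mn by simp
      ultimately have "g (Suc i) = q2 n" by simp
      then show ?thesis using 3 e2 q2(2) by (simp add: g_def)
    next
      case 4
      define j where "j = m + 2*K + 1 - i"
      have "g i = q2 (Suc j)" "g (Suc i) = q2 j" using 4 that by (auto simp: g_def j_def Suc_diff_le)
      moreover have "j < n" using 4 that K_def mn j_def by simp
      ultimately show ?thesis using q2(3) symm[of "q2 j" "q2 (Suc j)"] by simp
    qed
  qed
  have "is_cycle E c"
    unfolding is_cycle_def
  proof (intro conjI allI impI)
    show "3 \<le> length c" using K1 by (simp add: c_def)
    show "distinct c" unfolding c_def using inj by (simp del: upt_Suc add: distinct_map)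
    fix i assume "Suc i < length c"
    then show "E (c ! i) (c ! Suc i)" using edges[of i] by (simp add: c_def del: upt_Suc)
  next
    have "last c = g (2*K+1)" by (simp add: c_def del: upt_Suc add: last_map)
    moreover have "hd c = g 0" by (simp add: c_def del: upt_Suc add: hd_map)
    moreover have "g (2*K+1) = q2 (Suc m)" "g 0 = q2 m" using K1 m by (auto simp: g_def)
    moreover have "E (q2 m) (q2 (Suc m))" using q2(3) mn by simp
    ultimately show "E (last c) (hd c)" using symm[of "q2 m" "q2 (Suc m)"] by simp
  qed
  then show False using acyc by blast
qed

lemma parent:
  assumes "v \<noteq> r"
  shows "E v (parent E r v) \<and> Suc (d (parent E r v)) = d v"
  unfolding parent_def
proof (rule theI')
  obtain q where q: "q 0 = r" "q (d v) = v" "\<forall>i<d v. E (q i) (q (Suc i))"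
    using walk_d[of v] unfolding walk_fun by blast
  have pos: "d v \<noteq> 0" using d0 assms by blast
  have "E (q (d v - 1)) v" using q(3)[rule_format, of "d v - 1"] q(2) pos by simp
  moreover have "d (q (d v - 1)) = d v - 1" using d_path[OF q] by simp
  ultimately have "E v (q (d v - 1)) \<and> Suc (d (q (d v - 1))) = d v" using pos symm[of "q (d v - 1)" v] by simp
  then show "\<exists>!u. E v u \<and> Suc (d u) = d v" using uniq by blast
qed

end



lemma ell_ge1: "x \<ge> 1 \<Longrightarrow> ell j x \<ge> 1"
proof (induction j x rule: ell.induct)
  case (1 x) then show ?case by simp
next
  case (2 x) then show ?case by simp
next
  case (3 j x) then show ?case by simp
qed

lemma ell_pos: "n \<ge> 1 \<Longrightarrow> 0 < ell j (real n)"
proof -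
  assume "n \<ge> 1"
  then have "1 \<le> ell j (real n)" by (intro ell_ge1) simp
  then show ?thesis by linarith
qed

lemma wt_pos: "n \<ge> 1 \<Longrightarrow> wt k n > 0"
proof -
  assume n: "n \<ge> 1"
  have "(\<Prod>j<k. ell j (real n)) > 0" by (intro prod_pos ell_pos[OF n])
  then show ?thesis using n by (simp add: wt_def)
qed

lemma wt_nonneg: "wt k n \<ge> 0"
proof (cases "n = 0")
  case True then show ?thesis by (simp add: wt_def)
next
  case False
  then show ?thesis using wt_pos[of n k] by simp
qed

lemma Df_nonneg: "Df E r f v \<ge> 0" by (simp add: Df_def)

lemma nk_upper:
  assumes "f \<in> Lk E r k" "v \<noteq> r"
  shows "wt k (tdist E r v) * Df E r f v \<le> normk E r k f - cmod (f r)"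
proof -
  have "bdd_above (insert 0 ((\<lambda>v. wt k (tdist E r v) * Df E r f v) ` {v. v \<noteq> r}))"
    using assms(1) unfolding Lk_def by simp
  then have "wt k (tdist E r v) * Df E r f v \<le> Sup (insert 0 ((\<lambda>v. wt k (tdist E r v) * Df E r f v) ` {v. v \<noteq> r}))"
    by (rule cSup_upper[rotated]) (use assms(2) in auto)
  then show ?thesis unfolding normk_def by simp
qed

lemma nk_ge:
  assumes "f \<in> Lk E r k"
  shows "cmod (f r) \<le> normk E r k f"
proof -
  have "bdd_above (insert 0 ((\<lambda>v. wt k (tdist E r v) * Df E r f v) ` {v. v \<noteq> r}))"
    using assms(1) unfolding Lk_def by simp
  then have "0 \<le> Sup (insert 0 ((\<lambda>v. wt k (tdist E r v) * Df E r f v) ` {v. v \<noteq> r}))"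
    by (rule cSup_upper[rotated]) auto
  then show ?thesis unfolding normk_def by simp
qed

lemma nk_least:
  assumes "\<And>v. v \<noteq> r \<Longrightarrow> wt k (tdist E r v) * Df E r g v \<le> B" "0 \<le> B"
  shows "normk E r k g \<le> cmod (g r) + B"
proof -
  have "Sup (insert 0 ((\<lambda>v. wt k (tdist E r v) * Df E r g v) ` {v. v \<noteq> r})) \<le> B"
    by (rule cSup_least) (use assms in auto)
  then show ?thesis unfolding normk_def by simp
qed

lemma Lk_I:
  assumes "\<And>v. v \<noteq> r \<Longrightarrow> wt k (tdist E r v) * Df E r g v \<le> B"
  shows "g \<in> Lk E r k"
  unfolding Lk_def by (rule CollectI, rule bdd_aboveI[of _ B]) (use assms in auto)

lemma Df_scale: "Df E r (\<lambda>v. a * f v) v = cmod a * Df E r f v"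
  unfolding Df_def by (metis norm_mult right_diff_distrib)

lemma Df_scale_wt: "wt k (tdist E r v) * Df E r (\<lambda>v. a * f v) v = cmod a * (wt k (tdist E r v) * Df E r f v)"
  unfolding Df_scale by (rule mult.left_commute)

lemma scale_bound:
  assumes f: "f \<in> Lk E r k" and v: "v \<noteq> r"
  shows "wt k (tdist E r v) * Df E r (\<lambda>v. a * f v) v \<le> cmod a * (normk E r k f - cmod (f r))"
proof -
  have "wt k (tdist E r v) * Df E r f v \<le> normk E r k f - cmod (f r)" by (rule nk_upper[OF f v])
  then have "cmod a * (wt k (tdist E r v) * Df E r f v) \<le> cmod a * (normk E r k f - cmod (f r))"
    by (rule mult_left_mono) simp
  then show ?thesis unfolding Df_scale_wt .
qed

lemma Lk_scale: "f \<in> Lk E r k \<Longrightarrow> (\<lambda>v. a * f v) \<in> Lk E r k"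
  by (rule Lk_I[where B="cmod a * (normk E r k f - cmod (f r))"]) (rule scale_bound)

lemma nk_scale_le:
  assumes f: "f \<in> Lk E r k"
  shows "normk E r k (\<lambda>v. a * f v) \<le> cmod a * normk E r k f"
proof -
  have "normk E r k (\<lambda>v. a * f v) \<le> cmod (a * f r) + cmod a * (normk E r k f - cmod (f r))"
  proof (rule nk_least)
    fix v assume "v \<noteq> r"
    then show "wt k (tdist E r v) * Df E r (\<lambda>v. a * f v) v \<le> cmod a * (normk E r k f - cmod (f r))"
      by (rule scale_bound[OF f])
  next
    have "0 \<le> normk E r k f - cmod (f r)" using nk_ge[OF f] by simp
    then show "0 \<le> cmod a * (normk E r k f - cmod (f r))" by simp
  qed
  also have "\<dots> = cmod a * normk E r k f" by (simp add: norm_mult right_diff_distrib)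
  finally show ?thesis .
qed

lemma nk_nonneg: "f \<in> Lk E r k \<Longrightarrow> 0 \<le> normk E r k f"
  using nk_ge[of f E r k] norm_ge_zero[of "f r"] by linarith

lemma nk_scale:
  assumes f: "f \<in> Lk E r k"
  shows "normk E r k (\<lambda>v. a * f v) = cmod a * normk E r k f"
proof (cases "a = 0")
  case True
  have "normk E r k (\<lambda>v. a * f v) \<le> 0" using nk_scale_le[OF f, of a] True by simp
  moreover have "normk E r k (\<lambda>v. a * f v) \<ge> 0" by (rule nk_nonneg[OF Lk_scale[OF f]])
  ultimately show ?thesis using True by simp
next
  case False
  have "normk E r k (\<lambda>v. inverse a * (a * f v)) \<le> cmod (inverse a) * normk E r k (\<lambda>v. a * f v)"
    by (rule nk_scale_le[OF Lk_scale[OF f]])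
  moreover have "(\<lambda>v. inverse a * (a * f v)) = f"
  proof (rule ext)
    fix v show "inverse a * (a * f v) = f v" using False by (simp add: mult.assoc[symmetric])
  qed
  ultimately have "normk E r k f \<le> cmod (inverse a) * normk E r k (\<lambda>v. a * f v)"
    by simp
  then have "cmod a * normk E r k f \<le> cmod a * (cmod (inverse a) * normk E r k (\<lambda>v. a * f v))"
    by (rule mult_left_mono) simp
  also have "\<dots> = normk E r k (\<lambda>v. a * f v)" using False by (simp add: norm_inverse)
  finally have "cmod a * normk E r k f \<le> normk E r k (\<lambda>v. a * f v)" .
  then show ?thesis using nk_scale_le[OF f, of a] by simp
qed



definition chi :: "'v \<Rightarrow> complex \<Rightarrow> 'v \<Rightarrow> complex" where
  "chi w a = (\<lambda>v. if v = w then a else 0)"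

lemma chi_scale: "chi w a = (\<lambda>v. a * chi w 1 v)"
  unfolding chi_def by auto

lemma Df_le_sum:
  "Df E r (\<lambda>v. f v - c * g v) v \<le> Df E r f v + cmod c * Df E r g v"
proof -
  have "(f v - c * g v) - (f (parent E r v) - c * g (parent E r v)) =
        (f v - f (parent E r v)) - c * (g v - g (parent E r v))" by (simp add: algebra_simps)
  then have "Df E r (\<lambda>v. f v - c * g v) v = cmod ((f v - f (parent E r v)) - c * (g v - g (parent E r v)))"
    unfolding Df_def by (metis (no_types, lifting))
  also have "\<dots> \<le> cmod (f v - f (parent E r v)) + cmod (c * (g v - g (parent E r v)))"
    by (rule norm_triangle_ineq4)
  also have "\<dots> = Df E r f v + cmod c * Df E r g v" unfolding Df_def by (simp add: norm_mult)
  finally show ?thesis .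
qed

lemma dominate:
  assumes X: "X = Lk E r k \<or> X = Lk0 E r k" and f: "f \<in> X" and g: "g \<in> X"
    and al: "\<alpha> \<ge> 0" and be: "\<beta> \<ge> 0"
    and h: "\<And>v. v \<noteq> r \<Longrightarrow> wt k (tdist E r v) * Df E r h v \<le>
              \<alpha> * (wt k (tdist E r v) * Df E r f v) + \<beta> * (wt k (tdist E r v) * Df E r g v)"
  shows "h \<in> X"
proof -
  have fL: "f \<in> Lk E r k" and gL: "g \<in> Lk E r k" using X f g unfolding Lk0_def by auto
  have hL: "h \<in> Lk E r k"
  proof (rule Lk_I[where B = "\<alpha> * (normk E r k f - cmod (f r)) + \<beta> * (normk E r k g - cmod (g r))"])
    fix v assume v: "v \<noteq> r"
    have "\<alpha> * (wt k (tdist E r v) * Df E r f v) \<le> \<alpha> * (normk E r k f - cmod (f r))"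
      by (rule mult_left_mono[OF nk_upper[OF fL v] al])
    moreover have "\<beta> * (wt k (tdist E r v) * Df E r g v) \<le> \<beta> * (normk E r k g - cmod (g r))"
      by (rule mult_left_mono[OF nk_upper[OF gL v] be])
    ultimately show "wt k (tdist E r v) * Df E r h v \<le> \<alpha> * (normk E r k f - cmod (f r)) + \<beta> * (normk E r k g - cmod (g r))"
      using h[OF v] by linarith
  qed
  show ?thesis
  proof (cases "X = Lk E r k")
    case True then show ?thesis using hL by simp
  next
    case False
    then have X0: "X = Lk0 E r k" using X by blast
    have ftail: "\<forall>\<epsilon>>0. \<exists>N. \<forall>v. v \<noteq> r \<longrightarrow> tdist E r v \<ge> N \<longrightarrow> wt k (tdist E r v) * Df E r f v < \<epsilon>"
      using f X0 unfolding Lk0_def by blast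
    have gtail: "\<forall>\<epsilon>>0. \<exists>N. \<forall>v. v \<noteq> r \<longrightarrow> tdist E r v \<ge> N \<longrightarrow> wt k (tdist E r v) * Df E r g v < \<epsilon>"
      using g X0 unfolding Lk0_def by blast
    have "\<exists>N. \<forall>v. v \<noteq> r \<longrightarrow> tdist E r v \<ge> N \<longrightarrow> wt k (tdist E r v) * Df E r h v < \<epsilon>" if e: "\<epsilon> > 0" for \<epsilon>
    proof -
      define e' where "e' = \<epsilon> / (\<alpha> + \<beta> + 1)"
      have e'pos: "e' > 0" using e al be by (simp add: e'_def)
      obtain N1 where N1: "\<forall>v. v \<noteq> r \<longrightarrow> tdist E r v \<ge> N1 \<longrightarrow> wt k (tdist E r v) * Df E r f v < e'"
        using ftail e'pos by blast
      obtain N2 where N2: "\<forall>v. v \<noteq> r \<longrightarrow> tdist E r v \<ge> N2 \<longrightarrow> wt k (tdist E r v) * Df E r g v < e'"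
        using gtail e'pos by blast
      show ?thesis
      proof (rule exI[of _ "max N1 N2"], intro allI impI)
        fix v assume v: "v \<noteq> r" and vN: "max N1 N2 \<le> tdist E r v"
        have a1: "\<alpha> * (wt k (tdist E r v) * Df E r f v) \<le> \<alpha> * e'"
          using N1 v vN al by (intro mult_left_mono) auto
        have a2: "\<beta> * (wt k (tdist E r v) * Df E r g v) \<le> \<beta> * e'"
          using N2 v vN be by (intro mult_left_mono) auto
        have "\<alpha> * e' + \<beta> * e' < (\<alpha> + \<beta> + 1) * e'" using e'pos by (simp add: algebra_simps)
        also have "\<dots> = \<epsilon>" unfolding e'_def using al be by simp
        finally show "wt k (tdist E r v) * Df E r h v < \<epsilon>" using h[OF v] a1 a2 by linarith
      qed
    qed
    then show ?thesis using hL X0 unfolding Lk0_def by blast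
  qed
qed

lemma shift_in:
  assumes X: "X = Lk E r k \<or> X = Lk0 E r k" and f: "f \<in> X" and g: "g \<in> X"
  shows "(\<lambda>v. f v - c * g v) \<in> X"
proof (rule dominate[OF X f g, of 1 "cmod c"])
  fix v
  have "wt k (tdist E r v) * Df E r (\<lambda>v. f v - c * g v) v \<le> wt k (tdist E r v) * (Df E r f v + cmod c * Df E r g v)"
    by (rule mult_left_mono[OF Df_le_sum wt_nonneg])
  then show "wt k (tdist E r v) * Df E r (\<lambda>v. f v - c * g v) v
         \<le> 1 * (wt k (tdist E r v) * Df E r f v) + cmod c * (wt k (tdist E r v) * Df E r g v)"
    by (simp add: algebra_simps)
qed auto

context T
begin

lemma Df_chi_le: "Df E r (chi w a) v \<le> cmod a"
  unfolding Df_def chi_def by auto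

lemma Df_chi_zero:
  assumes v: "v \<noteq> r" and big: "Suc (d w) < d v"
  shows "Df E r (chi w a) v = 0"
proof -
  have "v \<noteq> w" using big by auto
  moreover have "parent E r v \<noteq> w" using parent[OF v] big by auto
  ultimately show ?thesis unfolding Df_def chi_def by simp
qed

lemma chi_Lk: "chi w a \<in> Lk E r k"
proof (rule Lk_I[where B = "Max (wt k ` {..Suc (d w)}) * cmod a"])
  fix v assume v: "v \<noteq> r"
  have M0: "Max (wt k ` {..Suc (d w)}) \<ge> 0"
    using wt_nonneg[of k 0] by (meson Max_ge atMost_iff finite_atMost finite_imageI image_eqI le0 order_trans)
  show "wt k (d v) * Df E r (chi w a) v \<le> Max (wt k ` {..Suc (d w)}) * cmod a"
  proof (cases "Suc (d w) < d v")
    case True then show ?thesis using Df_chi_zero[OF v True] M0 by simp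
  next
    case False
    then have "wt k (d v) \<le> Max (wt k ` {..Suc (d w)})" by (intro Max_ge) auto
    then show ?thesis using Df_chi_le[of w a v] wt_nonneg[of k "d v"] Df_nonneg[of E r "chi w a" v]
      by (intro mult_mono) auto
  qed
qed

lemma chi_Lk0: "chi w a \<in> Lk0 E r k"
  unfolding Lk0_def
proof (intro CollectI conjI chi_Lk allI impI)
  fix \<epsilon> :: real assume e: "\<epsilon> > 0"
  show "\<exists>N. \<forall>v. v \<noteq> r \<longrightarrow> d v \<ge> N \<longrightarrow> wt k (d v) * Df E r (chi w a) v < \<epsilon>"
  proof (rule exI[of _ "Suc (Suc (d w))"], intro allI impI)
    fix v assume v: "v \<noteq> r" and "Suc (Suc (d w)) \<le> d v"
    then have "Suc (d w) < d v" by simp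
    then show "wt k (d v) * Df E r (chi w a) v < \<epsilon>" using Df_chi_zero[OF v] e by simp
  qed
qed

lemma chi_X: "X = Lk E r k \<or> X = Lk0 E r k \<Longrightarrow> chi w a \<in> X"
  using chi_Lk chi_Lk0 by blast

lemma chi_norm_pos: "normk E r k (chi w 1) > 0"
proof (cases "w = r")
  case True
  then show ?thesis using nk_ge[OF chi_Lk, of w 1 k] by (simp add: chi_def)
next
  case False
  have p: "parent E r w \<noteq> w" using parent[OF False] by auto
  have "d w \<noteq> 0" using d0 False by blast
  then have wp: "wt k (d w) > 0" by (intro wt_pos) simp
  have "Df E r (chi w 1) w = 1" using p unfolding Df_def chi_def by simp
  then have "wt k (d w) \<le> normk E r k (chi w 1) - cmod (chi w 1 r)"
    using nk_upper[OF chi_Lk False, of k w 1] by simp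
  then show ?thesis using wp False by (simp add: chi_def)
qed

lemma chi_norm: "normk E r k (chi w a) = cmod a * normk E r k (chi w 1)"
  by (subst chi_scale) (rule nk_scale[OF chi_Lk])

end



lemma inv_ineq:
  fixes a b p q c :: complex
  assumes d: "\<delta> > 0" and pc: "cmod (p - c) \<ge> \<delta>" and qc: "cmod (q - c) \<ge> \<delta>" and pC: "cmod p \<le> C"
  shows "cmod (a / (p - c) - b / (q - c)) \<le> (1/\<delta> + C/\<delta>^2) * cmod (a - b) + (1/\<delta>^2) * cmod (p*a - q*b)"
proof -
  have pc0: "p - c \<noteq> 0" using pc d by auto
  have Cnn: "C \<ge> 0" using pC norm_ge_zero[of p] by linarith
  have qc0: "q - c \<noteq> 0" using qc d by auto
  have eq: "a / (p - c) - b / (q - c) = (a - b) / (p - c) + (p * (a - b) - (p*a - q*b)) / ((p - c) * (q - c))"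
  proof -
    have "(a - b) / (p - c) + (p * (a - b) - (p*a - q*b)) / ((p - c) * (q - c)) = ((a - b) * (q - c) + (p * (a - b) - (p*a - q*b))) / ((p - c) * (q - c))"
      using pc0 qc0 by (simp add: add_divide_distrib)
    also have "(a - b) * (q - c) + (p * (a - b) - (p*a - q*b)) = a * (q - c) - b * (p - c)" by (simp add: algebra_simps)
    also have "(a * (q - c) - b * (p - c)) / ((p - c) * (q - c)) = a / (p - c) - b / (q - c)"
      using pc0 qc0 by (simp add: diff_divide_distrib)
    finally show ?thesis by simp
  qed
  have t1: "cmod ((a - b) / (p - c)) \<le> cmod (a - b) / \<delta>"
    unfolding norm_divide by (rule divide_left_mono[OF pc]) (use d pc0 in auto)
  have num: "cmod (p * (a - b) - (p*a - q*b)) \<le> C * cmod (a - b) + cmod (p*a - q*b)"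
  proof -
    have "cmod (p * (a - b) - (p*a - q*b)) \<le> cmod (p * (a - b)) + cmod (p*a - q*b)" by (rule norm_triangle_ineq4)
    also have "cmod (p * (a - b)) \<le> C * cmod (a - b)" unfolding norm_mult by (rule mult_right_mono[OF pC]) simp
    finally show ?thesis by simp
  qed
  have den: "\<delta>^2 \<le> cmod ((p - c) * (q - c))"
    unfolding norm_mult power2_eq_square by (rule mult_mono[OF pc qc]) (use d in auto)
  have t2: "cmod ((p * (a - b) - (p*a - q*b)) / ((p - c) * (q - c))) \<le> (C * cmod (a - b) + cmod (p*a - q*b)) / \<delta>^2"
    unfolding norm_divide by (rule frac_le[OF _ num _ den]) (use d Cnn in auto)
  have "cmod (a / (p - c) - b / (q - c)) \<le> cmod ((a - b) / (p - c)) + cmod ((p * (a - b) - (p*a - q*b)) / ((p - c) * (q - c)))"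
    unfolding eq by (rule norm_triangle_ineq)
  also have "\<dots> \<le> cmod (a - b) / \<delta> + (C * cmod (a - b) + cmod (p*a - q*b)) / \<delta>^2"
    using t1 t2 by linarith
  also have "\<dots> = (1/\<delta> + C/\<delta>^2) * cmod (a - b) + (1/\<delta>^2) * cmod (p*a - q*b)"
    by (simp add: algebra_simps add_divide_distrib)
  finally show ?thesis .
qed

theorem theorem4p2:
  fixes E :: "'v \<Rightarrow> 'v \<Rightarrow> bool" and r :: 'v and k :: nat
    and \<psi> :: "'v \<Rightarrow> complex" and X :: "('v \<Rightarrow> complex) set"
  assumes "rooted_tree_no_terminal E r"
    and "X = Lk E r k \<or> X = Lk0 E r k"
    and "bounded_op X (normk E r k) (mult_op \<psi>)"
  shows "point_spectrum X (normk E r k) (mult_op \<psi>) = range \<psi> \<and>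
         op_spectrum X (normk E r k) (mult_op \<psi>) = closure (range \<psi>) \<and>
         approx_point_spectrum X (normk E r k) (mult_op \<psi>) = closure (range \<psi>)"
proof -
  interpret T E r by (rule T.intro) (rule assms(1))
  note X = assms(2)
  let ?N = "normk E r k"
  let ?A = "mult_op \<psi>"
  have XL: "\<And>f. f \<in> X \<Longrightarrow> f \<in> Lk E r k" using X unfolding Lk0_def by auto
  obtain C0 where C0: "\<forall>f\<in>X. ?N (?A f) \<le> C0 * ?N f" using assms(3) unfolding bounded_op_def by blast
  have AX: "\<And>f. f \<in> X \<Longrightarrow> ?A f \<in> X" using assms(3) unfolding bounded_op_def by blast
  have Achi: "\<And>w a. ?A (chi w a) = chi w (\<psi> w * a)" unfolding mult_op_def chi_def by auto
  have psib: "cmod (\<psi> w) \<le> C0" for w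
  proof -
    have "?N (?A (chi w 1)) \<le> C0 * ?N (chi w 1)" using C0 chi_X[OF X] by blast
    then have "cmod (\<psi> w) * ?N (chi w 1) \<le> C0 * ?N (chi w 1)" unfolding Achi chi_norm[where w=w and a="\<psi> w * 1" and k=k] by simp
    then show ?thesis using chi_norm_pos[where w=w and k=k] by simp
  qed
  have C0nn: "C0 \<ge> 0" using psib[of r] norm_ge_zero[of "\<psi> r"] by linarith
  have shA: "shift_op ?A c f = (\<lambda>v. ?A f v - c * f v)" for c f unfolding shift_op_def ..
  have shX: "\<And>f c. f \<in> X \<Longrightarrow> shift_op ?A c f \<in> X"
    unfolding shA by (rule shift_in[OF X AX]) auto

  have P: "point_spectrum X ?N ?A = range \<psi>"
  proof (rule set_eqI, rule iffI)
    fix c assume "c \<in> point_spectrum X ?N ?A"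
    then obtain f where f: "f \<in> X" "f \<noteq> (\<lambda>_. 0)" "?A f = (\<lambda>v. c * f v)"
      unfolding point_spectrum_def by blast
    obtain w where w: "f w \<noteq> 0" using f(2) by auto
    have "\<psi> w * f w = c * f w" using fun_cong[OF f(3), of w] unfolding mult_op_def by simp
    then have "\<psi> w = c" using w by simp
    then show "c \<in> range \<psi>" by blast
  next
    fix c assume "c \<in> range \<psi>"
    then obtain w where w: "c = \<psi> w" by blast
    have "chi w 1 \<noteq> (\<lambda>_. 0)"
    proof
      assume "chi w 1 = (\<lambda>_. 0)"
      then have "chi w 1 w = 0" by simp
      then show False by (simp add: chi_def)
    qed
    moreover have "?A (chi w 1) = (\<lambda>v. c * chi w 1 v)" unfolding w mult_op_def chi_def by auto
    ultimately show "c \<in> point_spectrum X ?N ?A" unfolding point_spectrum_def using chi_X[OF X] by blast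
  qed

  have S1: "op_spectrum X ?N ?A \<subseteq> closure (range \<psi>)"
  proof
    fix c assume c: "c \<in> op_spectrum X ?N ?A"
    show "c \<in> closure (range \<psi>)"
    proof (rule ccontr)
      assume nc: "c \<notin> closure (range \<psi>)"
      have "open (- closure (range \<psi>))" by auto
      then obtain \<delta> where dpos: "\<delta> > 0" and db: "ball c \<delta> \<subseteq> - closure (range \<psi>)"
        using nc open_contains_ball by blast
      have dl: "\<delta> \<le> cmod (\<psi> v - c)" for v
      proof -
        have "\<psi> v \<notin> ball c \<delta>" using db closure_subset by blast
        then show ?thesis by (simp add: dist_norm norm_minus_commute)
      qed
      have nz: "\<psi> v - c \<noteq> 0" for v using dl[of v] dpos by auto
      define \<phi> where "\<phi> v = 1 / (\<psi> v - c)" for v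
      define \<alpha> where "\<alpha> = 1/\<delta> + C0/\<delta>^2"
      define \<beta> where "\<beta> = 1/\<delta>^2"
      have al: "\<alpha> \<ge> 0" using dpos C0nn by (simp add: \<alpha>_def)
      have be: "\<beta> \<ge> 0" using dpos by (simp add: \<beta>_def)
      have pw: "wt k (tdist E r v) * Df E r (mult_op \<phi> f) v \<le>
          \<alpha> * (wt k (tdist E r v) * Df E r f v) + \<beta> * (wt k (tdist E r v) * Df E r (?A f) v)" for f v
      proof -
        have "Df E r (mult_op \<phi> f) v = cmod (f v / (\<psi> v - c) - f (parent E r v) / (\<psi> (parent E r v) - c))"
          unfolding Df_def mult_op_def \<phi>_def by simp
        also have "\<dots> \<le> \<alpha> * cmod (f v - f (parent E r v)) + \<beta> * cmod (\<psi> v * f v - \<psi> (parent E r v) * f (parent E r v))"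
          unfolding \<alpha>_def \<beta>_def by (rule inv_ineq[OF dpos dl dl psib])
        also have "\<dots> = \<alpha> * Df E r f v + \<beta> * Df E r (?A f) v" unfolding Df_def mult_op_def by simp
        finally have "Df E r (mult_op \<phi> f) v \<le> \<alpha> * Df E r f v + \<beta> * Df E r (?A f) v" .
        then have "wt k (tdist E r v) * Df E r (mult_op \<phi> f) v \<le> wt k (tdist E r v) * (\<alpha> * Df E r f v + \<beta> * Df E r (?A f) v)"
          by (rule mult_left_mono[OF _ wt_nonneg])
        then show ?thesis by (simp add: algebra_simps)
      qed
      have SX: "mult_op \<phi> f \<in> X" if f: "f \<in> X" for f
        by (rule dominate[OF X f AX[OF f] al be pw])
      have Sbd: "?N (mult_op \<phi> f) \<le> (1/\<delta> + \<alpha> + \<beta> * C0) * ?N f" if f: "f \<in> X" for f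
      proof -
        have fL: "f \<in> Lk E r k" by (rule XL[OF f])
        have AfL: "?A f \<in> Lk E r k" by (rule XL[OF AX[OF f]])
        have n1: "0 \<le> ?N f - cmod (f r)" using nk_ge[OF fL] by simp
        have n2: "0 \<le> ?N (?A f) - cmod (?A f r)" using nk_ge[OF AfL] by simp
        have "?N (mult_op \<phi> f) \<le> cmod (mult_op \<phi> f r) + (\<alpha> * (?N f - cmod (f r)) + \<beta> * (?N (?A f) - cmod (?A f r)))"
        proof (rule nk_least)
          fix v assume v: "v \<noteq> r"
          have "\<alpha> * (wt k (tdist E r v) * Df E r f v) \<le> \<alpha> * (?N f - cmod (f r))"
            by (rule mult_left_mono[OF nk_upper[OF fL v] al])
          moreover have "\<beta> * (wt k (tdist E r v) * Df E r (?A f) v) \<le> \<beta> * (?N (?A f) - cmod (?A f r))"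
            by (rule mult_left_mono[OF nk_upper[OF AfL v] be])
          ultimately show "wt k (tdist E r v) * Df E r (mult_op \<phi> f) v \<le> \<alpha> * (?N f - cmod (f r)) + \<beta> * (?N (?A f) - cmod (?A f r))"
            using pw[where f=f and v=v] by linarith
        next
          show "0 \<le> \<alpha> * (?N f - cmod (f r)) + \<beta> * (?N (?A f) - cmod (?A f r))"
            using n1 n2 al be by simp
        qed
        moreover have "cmod (mult_op \<phi> f r) \<le> ?N f / \<delta>"
        proof -
          have "cmod (mult_op \<phi> f r) = cmod (f r) / cmod (\<psi> r - c)"
            unfolding mult_op_def \<phi>_def by (simp add: norm_divide)
          also have "\<dots> \<le> cmod (f r) / \<delta>" by (rule divide_left_mono[OF dl]) (use dpos nz in auto)
          also have "\<dots> \<le> ?N f / \<delta>" by (rule divide_right_mono[OF nk_ge[OF fL]]) (use dpos in auto)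
          finally show ?thesis .
        qed
        moreover have "\<alpha> * (?N f - cmod (f r)) \<le> \<alpha> * ?N f" using al by (simp add: mult_left_mono)
        moreover have "\<beta> * (?N (?A f) - cmod (?A f r)) \<le> \<beta> * (C0 * ?N f)"
        proof -
          have "?N (?A f) - cmod (?A f r) \<le> C0 * ?N f" using C0 f norm_ge_zero[of "?A f r"]
            by (smt (verit, best))
          then show ?thesis using be by (simp add: mult_left_mono)
        qed
        ultimately have "?N (mult_op \<phi> f) \<le> ?N f / \<delta> + \<alpha> * ?N f + \<beta> * (C0 * ?N f)" by linarith
        then show ?thesis by (simp add: algebra_simps)
      qed
      have inv: "invertible_op X ?N (shift_op ?A c)"
        unfolding invertible_op_def
      proof (rule exI[of _ "mult_op \<phi>"], intro conjI ballI)
        show "bounded_op X ?N (mult_op \<phi>)"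
          unfolding bounded_op_def
        proof (intro conjI ballI allI)
          fix f assume "f \<in> X" then show "mult_op \<phi> f \<in> X" by (rule SX)
        next
          fix f g a b
          show "mult_op \<phi> (\<lambda>v. a * f v + b * g v) = (\<lambda>v. a * mult_op \<phi> f v + b * mult_op \<phi> g v)"
            unfolding mult_op_def by (simp add: algebra_simps)
        next
          show "\<exists>C. \<forall>f\<in>X. ?N (mult_op \<phi> f) \<le> C * ?N f" using Sbd by blast
        qed
      next
        fix f assume "f \<in> X"
        show "mult_op \<phi> (shift_op ?A c f) = f"
        proof (rule ext)
          fix v show "mult_op \<phi> (shift_op ?A c f) v = f v"
            unfolding shift_op_def mult_op_def \<phi>_def using nz[of v]
            by (simp add: left_diff_distrib[symmetric])
        qed
        show "shift_op ?A c (mult_op \<phi> f) = f"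
        proof (rule ext)
          fix v
          have "\<psi> v * (1 / (\<psi> v - c) * f v) - c * (1 / (\<psi> v - c) * f v) = ((\<psi> v - c) * f v) / (\<psi> v - c)"
            by (simp add: left_diff_distrib diff_divide_distrib)
          also have "\<dots> = f v" using nz[of v] by simp
          finally show "shift_op ?A c (mult_op \<phi> f) v = f v"
            unfolding shift_op_def mult_op_def \<phi>_def .
        qed
      qed
      then show False using c unfolding op_spectrum_def by simp
    qed
  qed

  have S2: "approx_point_spectrum X ?N ?A \<subseteq> op_spectrum X ?N ?A"
  proof
    fix c assume "c \<in> approx_point_spectrum X ?N ?A"
    then obtain fs where fs: "\<forall>n. fs n \<in> X \<and> ?N (fs n) = 1"
      and lim: "(\<lambda>n. ?N (shift_op ?A c (fs n))) \<longlonglongrightarrow> 0"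
      unfolding approx_point_spectrum_def by blast
    show "c \<in> op_spectrum X ?N ?A" unfolding op_spectrum_def
    proof (rule CollectI, rule notI)
      assume "invertible_op X ?N (shift_op ?A c)"
      then obtain S CS where S: "\<forall>f\<in>X. S (shift_op ?A c f) = f" and CS: "\<forall>f\<in>X. ?N (S f) \<le> CS * ?N f"
        unfolding invertible_op_def bounded_op_def by blast
      have "(\<lambda>n. CS * ?N (shift_op ?A c (fs n))) \<longlonglongrightarrow> CS * 0"
        by (rule tendsto_mult[OF tendsto_const lim])
      then have "\<forall>\<^sub>F n in sequentially. CS * ?N (shift_op ?A c (fs n)) < 1"
        by (rule order_tendstoD) simp
      then obtain M where "\<forall>n\<ge>M. CS * ?N (shift_op ?A c (fs n)) < 1"
        unfolding eventually_sequentially by blast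
      then obtain n where n: "CS * ?N (shift_op ?A c (fs n)) < 1" by blast
      have "1 = ?N (S (shift_op ?A c (fs n)))" using S fs by simp
      also have "\<dots> \<le> CS * ?N (shift_op ?A c (fs n))" using CS shX fs by blast
      finally show False using n by simp
    qed
  qed

  have S3: "closure (range \<psi>) \<subseteq> approx_point_spectrum X ?N ?A"
  proof
    fix c assume "c \<in> closure (range \<psi>)"
    then obtain x where x: "\<forall>n. x n \<in> range \<psi>" "x \<longlonglongrightarrow> c"
      using closure_sequential by blast
    have "\<forall>n. \<exists>v. \<psi> v = x n" using x(1) by (metis imageE)
    then obtain w where w: "\<forall>n. \<psi> (w n) = x n" by metis
    define fs where "fs n = chi (w n) (1 / complex_of_real (?N (chi (w n) 1)))" for n
    have n1: "?N (fs n) = 1" for n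
    proof -
      have p: "?N (chi (w n) 1) > 0" by (rule chi_norm_pos)
      have "cmod (1 / complex_of_real (?N (chi (w n) 1))) = 1 / ?N (chi (w n) 1)"
        using p by (simp add: norm_divide)
      then show ?thesis unfolding fs_def chi_norm[where w="w n" and k=k and a="1 / complex_of_real (?N (chi (w n) 1))"] using p by simp
    qed
    have sh: "shift_op ?A c (fs n) = (\<lambda>v. (x n - c) * fs n v)" for n
    proof (rule ext)
      fix v show "shift_op ?A c (fs n) v = (x n - c) * fs n v"
      proof (cases "v = w n")
        case True then show ?thesis unfolding shift_op_def mult_op_def fs_def chi_def using w
          by (simp add: left_diff_distrib diff_divide_distrib)
      next
        case False then show ?thesis unfolding shift_op_def mult_op_def fs_def chi_def by simp
      qed
    qed
    have "?N (shift_op ?A c (fs n)) = cmod (x n - c)" for n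
      unfolding sh using nk_scale[OF XL[OF chi_X[OF X]], where a="x n - c"] n1 unfolding fs_def by simp
    moreover have "(\<lambda>n. cmod (x n - c)) \<longlonglongrightarrow> 0" by (rule tendsto_norm_zero[OF LIM_zero[OF x(2)]])
    ultimately have "(\<lambda>n. ?N (shift_op ?A c (fs n))) \<longlonglongrightarrow> 0" by simp
    moreover have "\<forall>n. fs n \<in> X \<and> ?N (fs n) = 1" using n1 chi_X[OF X] unfolding fs_def by blast
    ultimately show "c \<in> approx_point_spectrum X ?N ?A" unfolding approx_point_spectrum_def by blast
  qed
  show ?thesis using P S1 S2 S3 by blast
qed


end
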